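(* Let $\gamma$ be a $G$-invariant K\"ahler metric on ${\rm M}_1$ of the form $\gamma=A\,d\boldsymbol{\lambda}\cdot d\boldsymbol{\lambda}+\left(\frac{A}{1+\lambda^2}+\frac{A'}{\lambda}\right)(\boldsymbol{\lambda}\cdot d\boldsymbol{\lambda})^2+\frac{1+2\lambda^2}{4}A\,\boldsymbol{\sigma}\cdot\boldsymbol{\sigma}+\frac{1+\lambda^2}{4\lambda}A'(\boldsymbol{\lambda}\cdot\boldsymbol{\sigma})^2+A\,\boldsymbol{\lambda}\cdot(\boldsymbol{\sigma}\times d\boldsymbol{\lambda})$ for a smooth function $A=A(\lambda)$, let $\Omega(X,Y)=\gamma(JX,Y)$ be its K\"ahler form, and let $H$ be a smooth $G$-invariant function on ${\rm M}_1$, written as a function $H(\lambda)$ of $\lambda$. Then the Hamiltonian vector field $X_H$, defined by $\Omega(Y,X_H)=dH(Y)$ for all vector fields $Y$, is $$X_H=\frac{2\sqrt{1+\lambda^2}\,H'(\lambda)}{(1+2\lambda^2)A(\lambda)+(\lambda+\lambda^3)A'(\lambda)}\,\widehat{\boldsymbol{\lambda}}\cdot\boldsymbol{\theta},$$ where $\widehat{\boldsymbol{\lambda}}=\boldsymbol{\lambda}/\lambda$ and $\widehat{\boldsymbol{\lambda}}\cdot\boldsymbol{\theta}=\sum_a\widehat\lambda_a\theta_a$.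
   Context: ${\rm M}_1$ is the space of degree one rational maps $W(z)=\frac{a_{11}z+a_{12}}{a_{21}z+a_{22}}$ of $S^2=\mathbb{C}\cup\{\infty\}$, identified with $PL(2,\mathbb{C})$, with complex structure $J$ induced by the open inclusion into $\mathbb{C}P^3$, $W\mapsto[a_{11}:a_{12}:a_{21}:a_{22}]$. With $\tau_a$ the Pauli matrices, every $[M]\in PL(2,\mathbb{C})$ decomposes uniquely as $[M]=[U](\Lambda\mathbb{I}_2+\boldsymbol{\lambda}\cdot\boldsymbol{\tau})$, $[U]\in PU(2)$, $\boldsymbol{\lambda}\in\mathbb{R}^3$, $\lambda=|\boldsymbol{\lambda}|$, $\Lambda=\sqrt{1+\lambda^2}$, giving ${\rm M}_1\cong PU(2)\times\mathbb{R}^3$. $\theta_a$ are the left-invariant vector fields on $PU(2)$ with value $\frac{i}{2}\tau_a$ at the identity and $\sigma_a$ the dual left-invariant 1-forms, both transported to ${\rm M}_1$ via this product structure (so $\{\partial/\partial\lambda_a,\theta_a\}$ is a frame dual to $\{d\lambda_a,\sigma_a\}$); $\cdot,\times$ are $\mathbb{R}^3$ scalar/vector products applied componentwise, juxtaposition means symmetrized tensor product. $G$ is the group generated by $[M]\mapsto[L][M][R]$ ($[L],[R]\in PU(2)$) and $P:W(z)\mapsto\overline{W(\bar z)}$. *)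

theory Defs
  imports "HOL-Analysis.Analysis"
begin

text \<open>Concrete coordinate model of M_1 = PU(2) x R^3.  A point is a pair (U, x) with U a
  2x2 unitary matrix (representative of [U] in PU(2)) and x the vector lambda in R^3.
  A tangent vector at (U,x) is a pair (v, w) of real 3-vectors, standing for
  sum_a v_a d/dlambda_a + sum_a w_a theta_a (the global frame of the paper).\<close>

type_synonym cmat = "complex^2^2"
type_synonym tvec = "(real^3) \<times> (real^3)"

definition cscale :: "complex \<Rightarrow> cmat \<Rightarrow> cmat" where
  "cscale c M = (\<chi> i j. c * M$i$j)"

definition unitary2 :: "cmat \<Rightarrow> bool" where
  "unitary2 U \<longleftrightarrow> (\<chi> i j. cnj (U$j$i)) ** U = mat 1"

definition pauli :: "3 \<Rightarrow> cmat" where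
  "pauli a =
     (if a = 1 then (\<chi> i j. if i = j then 0 else 1)
      else if a = 2 then (\<chi> i j. if i = j then 0 else if i = 1 then - \<i> else \<i>)
      else (\<chi> i j. if i \<noteq> j then 0 else if i = 1 then 1 else -1))"

definition pauli_dot :: "real^3 \<Rightarrow> cmat" where
  "pauli_dot x = (\<Sum>a\<in>UNIV. (x$a) *\<^sub>R pauli a)"

definition Mfac :: "real^3 \<Rightarrow> cmat" where
  "Mfac x = sqrt (1 + (norm x)\<^sup>2) *\<^sub>R mat 1 + pauli_dot x"

definition Mpt :: "cmat \<Rightarrow> real^3 \<Rightarrow> cmat" where
  "Mpt U x = U ** Mfac x"

text \<open>Differential of (U,x) |-> U (Lambda I + x . tau) applied to the tangent vector (v,w);
  theta_a at U is the velocity of t |-> U exp(t i tau_a / 2).\<close>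
definition dM :: "cmat \<Rightarrow> real^3 \<Rightarrow> tvec \<Rightarrow> cmat" where
  "dM U x X = U ** (cscale (\<i>/2) (pauli_dot (snd X)) ** Mfac x
       + ((x \<bullet> fst X) / sqrt (1 + (norm x)\<^sup>2)) *\<^sub>R mat 1 + pauli_dot (fst X))"

text \<open>Complex structure J induced by the open inclusion into CP^3: the tangent space of
  CP^3 at [M] is C^{2x2} / C M, and J is multiplication by i there.\<close>
definition Jop :: "cmat \<Rightarrow> real^3 \<Rightarrow> tvec \<Rightarrow> tvec" where
  "Jop U x X = (THE Y. \<exists>c. dM U x Y = cscale \<i> (dM U x X) + cscale c (Mpt U x))"

definition dl :: "3 \<Rightarrow> tvec \<Rightarrow> real" where "dl a X = fst X $ a"
definition sig :: "3 \<Rightarrow> tvec \<Rightarrow> real" where "sig a X = snd X $ a"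
definition ldl :: "real^3 \<Rightarrow> tvec \<Rightarrow> real" where "ldl x X = x \<bullet> fst X"
definition lsig :: "real^3 \<Rightarrow> tvec \<Rightarrow> real" where "lsig x X = x \<bullet> snd X"

definition symp :: "(tvec \<Rightarrow> real) \<Rightarrow> (tvec \<Rightarrow> real) \<Rightarrow> tvec \<Rightarrow> tvec \<Rightarrow> real" where
  "symp \<alpha> \<beta> X Y = (\<alpha> X * \<beta> Y + \<beta> X * \<alpha> Y) / 2"

definition eps3 :: "3 \<Rightarrow> 3 \<Rightarrow> 3 \<Rightarrow> real" where
  "eps3 a b c =
     (if (a,b,c) \<in> {(1,2,3),(2,3,1),(3,1,2)} then 1
      else if (a,b,c) \<in> {(1,3,2),(3,2,1),(2,1,3)} then -1 else 0)"

definition gamma :: "(real \<Rightarrow> real) \<Rightarrow> real^3 \<Rightarrow> tvec \<Rightarrow> tvec \<Rightarrow> real" where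
  "gamma A x X Y =
     (let l = norm x; a = A l; a' = deriv A l in
        a * (\<Sum>i\<in>UNIV. symp (dl i) (dl i) X Y)
      + (a / (1 + l\<^sup>2) + a' / l) * symp (ldl x) (ldl x) X Y
      + (1 + 2 * l\<^sup>2) / 4 * a * (\<Sum>i\<in>UNIV. symp (sig i) (sig i) X Y)
      + (1 + l\<^sup>2) / (4 * l) * a' * symp (lsig x) (lsig x) X Y
      + a * (\<Sum>i\<in>UNIV. \<Sum>j\<in>UNIV. \<Sum>k\<in>UNIV. x$i * eps3 i j k * symp (sig j) (dl k) X Y))"

definition Omega :: "(real \<Rightarrow> real) \<Rightarrow> cmat \<Rightarrow> real^3 \<Rightarrow> tvec \<Rightarrow> tvec \<Rightarrow> real" where
  "Omega A U x X Y = gamma A x (Jop U x X) Y"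

definition dH :: "(real \<Rightarrow> real) \<Rightarrow> real^3 \<Rightarrow> tvec \<Rightarrow> real" where
  "dH H x X = frechet_derivative (\<lambda>y. H (norm y)) (at x) (fst X)"

definition HamVF :: "(real \<Rightarrow> real) \<Rightarrow> (real \<Rightarrow> real) \<Rightarrow> cmat \<Rightarrow> real^3 \<Rightarrow> tvec" where
  "HamVF A H U x = (THE Z. \<forall>Y. Omega A U x Y Z = dH H x Y)"

definition smooth_on :: "real set \<Rightarrow> (real \<Rightarrow> real) \<Rightarrow> bool" where
  "smooth_on S f \<longleftrightarrow> (\<exists>D. D 0 = f \<and> (\<forall>n. \<forall>t\<in>S. (D n has_real_derivative D (Suc n) t) (at t)))"

end

theory Submission
  imports Defs
begin

lemma pauli_dot_ent:
  "pauli_dot x $ 1 $ 1 = complex_of_real (x$3)"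
  "pauli_dot x $ 1 $ 2 = complex_of_real (x$1) - \<i> * complex_of_real (x$2)"
  "pauli_dot x $ 2 $ 1 = complex_of_real (x$1) + \<i> * complex_of_real (x$2)"
  "pauli_dot x $ 2 $ 2 = - complex_of_real (x$3)"
  by (simp_all add: pauli_dot_def pauli_def sum_3, simp_all add: scaleR_conv_of_real)

definition LL :: "real^3 \<Rightarrow> real" where "LL x = sqrt (1 + (norm x)\<^sup>2)"

lemma LL_sq: "(LL x)\<^sup>2 = 1 + x$1^2 + x$2^2 + x$3^2"
  unfolding LL_def by (simp add: norm_vec_def L2_set_def sum_3 power2_eq_square)

lemma LL_pos: "LL x > 0" unfolding LL_def by (simp add: add_pos_nonneg)

definition K :: "real^3 \<Rightarrow> tvec \<Rightarrow> cmat" where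
  "K x X = cscale (\<i>/2) (pauli_dot (snd X)) ** Mfac x
       + ((x \<bullet> fst X) / LL x) *\<^sub>R mat 1 + pauli_dot (fst X)"


definition J0 :: "real^3 \<Rightarrow> tvec \<Rightarrow> tvec" where
  "J0 x X = (let v = fst X; w = snd X; L = LL x; wx = w$1*x$1+w$2*x$2+w$3*x$3 in
     (vector [(v$2*x$3 - v$3*x$2)/L - w$1/(2*L) - x$1*wx/(2*L),
              (v$3*x$1 - v$1*x$3)/L - w$2/(2*L) - x$2*wx/(2*L),
              (v$1*x$2 - v$2*x$1)/L - w$3/(2*L) - x$3*wx/(2*L)],
      vector [(2 * v$1 - (w$2*x$3 - w$3*x$2))/L,
              (2 * v$2 - (w$3*x$1 - w$1*x$3))/L,
              (2 * v$3 - (w$1*x$2 - w$2*x$1))/L]))"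



lemma K_J0: "K x (J0 x X) = cscale \<i> (K x X)"
proof -
  obtain v w where X: "X = (v,w)" by (cases X)
  have L2: "(LL x)\<^sup>2 = 1 + x$1^2 + x$2^2 + x$3^2" by (rule LL_sq)
  have L0: "LL x \<noteq> 0" using LL_pos[of x] by simp
  show ?thesis
  unfolding K_def J0_def X Let_def
  apply (simp add: vec_eq_iff forall_2 matrix_matrix_mult_def sum_2 cscale_def Mfac_def pauli_dot_ent mat_def inner_vec_def sum_3 LL_def[symmetric])
  apply (simp add: complex_eq_iff)
  apply (insert L0 L2)
  apply (simp add: field_simps)
  apply (intro conjI)
  apply algebra+
  done
qed

lemma K_inj:
  assumes "K x (v,w) = K x (v',w') + cscale c (Mfac x)"
  shows "v = v' \<and> w = w'"
proof -
  have L2: "(LL x)\<^sup>2 = 1 + x$1^2 + x$2^2 + x$3^2" by (rule LL_sq)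
  have L0: "LL x \<noteq> 0" using LL_pos[of x] by simp
  have Li: "LL x * inverse (LL x) = 1" using L0 by simp
  from assms show ?thesis
  unfolding K_def
  apply (simp add: vec_eq_iff forall_2 forall_3 matrix_matrix_mult_def sum_2 cscale_def Mfac_def pauli_dot_ent mat_def inner_vec_def sum_3 LL_def[symmetric])
  apply (simp add: complex_eq_iff)
  apply (insert L0 L2 Li)
  apply (simp add: field_simps)
  apply (elim conjE)
  apply (intro conjI)
  apply algebra+
  done
qed

lemma norm3_sq: "(norm (x::real^3))\<^sup>2 = x$1^2 + x$2^2 + x$3^2"
  by (simp add: norm_vec_def L2_set_def sum_3 power2_eq_square)

lemma G1:
  assumes "x \<noteq> 0"
  shows "gamma A x X (0, u *\<^sub>R x) = u * (x \<bullet> snd X) / 4 *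
     ((1 + 2 * (norm x)\<^sup>2) * A (norm x) + (norm x + (norm x)^3) * deriv A (norm x))"
proof -
  obtain v w where X: "X = (v,w)" by (cases X)
  obtain n where nd: "norm x = n" by simp
  obtain a where ad: "A n = a" by simp
  obtain b where bd: "deriv A n = b" by simp
  have n0: "n \<noteq> 0" using assms nd by auto
  have n2: "n\<^sup>2 = x$1^2 + x$2^2 + x$3^2" using norm3_sq[of x] nd by simp
  show ?thesis
    unfolding gamma_def X Let_def symp_def dl_def sig_def ldl_def lsig_def nd ad bd
    apply (simp add: sum_3 eps3_def inner_vec_def)
    apply (simp add: field_simps n0)
    using n2 apply algebra
    done
qed

lemma G2: "x \<bullet> snd (J0 x (v,w)) = 2 * (x \<bullet> v) / LL x"
  unfolding J0_def Let_def
  using LL_pos[of x] by (simp add: inner_vec_def sum_3 field_simps)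

lemma JJ: "J0 x (J0 x (v,w)) = (-v, -w)"
proof -
  have L2: "(LL x)\<^sup>2 = 1 + x$1^2 + x$2^2 + x$3^2" by (rule LL_sq)
  have L0: "LL x \<noteq> 0" using LL_pos[of x] by simp
  show ?thesis
    unfolding J0_def Let_def
    apply (simp add: vec_eq_iff forall_3)
    apply (insert L0 L2)
    apply (simp add: field_simps)
    apply (intro conjI)
    apply algebra+
    done
qed

lemma gamma_diff: "gamma A x X Z - gamma A x X Z' = gamma A x X (Z - Z')"
proof -
  obtain v w where X: "X = (v,w)" by (cases X)
  obtain v1 w1 where Z: "Z = (v1,w1)" by (cases Z)
  obtain v2 w2 where Z': "Z' = (v2,w2)" by (cases Z')
  show ?thesis
    unfolding gamma_def X Z Z' Let_def symp_def dl_def sig_def ldl_def lsig_def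
    by (simp add: sum_3 inner_vec_def algebra_simps diff_divide_distrib)
qed

lemma dM_K: "dM U x X = U ** K x X"
  by (simp add: dM_def K_def LL_def)

lemma Mpt_eq: "Mpt U x = U ** Mfac x" by (simp add: Mpt_def)

lemma cscale_mult: "cscale c (U ** M) = U ** cscale c M"
  by (simp add: vec_eq_iff matrix_matrix_mult_def cscale_def sum_distrib_left mult_ac)

lemma cscale_0: "cscale 0 M = 0"
  by (simp add: vec_eq_iff cscale_def)

lemma unitary_cancel:
  assumes "unitary2 U" "U ** M = U ** N"
  shows "M = N"
proof -
  let ?V = "(\<chi> i j. cnj (U$j$i)) :: cmat"
  have VU: "?V ** U = mat 1" using assms(1) by (simp add: unitary2_def)
  have "M = (?V ** U) ** M" by (simp add: VU matrix_mul_lid)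
  also have "\<dots> = ?V ** (U ** M)" by (simp add: matrix_mul_assoc)
  also have "\<dots> = ?V ** (U ** N)" using assms(2) by simp
  also have "\<dots> = (?V ** U) ** N" by (simp add: matrix_mul_assoc)
  also have "\<dots> = N" by (simp add: VU matrix_mul_lid)
  finally show ?thesis .
qed

lemma Jop_eq:
  assumes "unitary2 U"
  shows "Jop U x X = J0 x X"
  unfolding Jop_def
proof (rule the_equality)
  show "\<exists>c. dM U x (J0 x X) = cscale \<i> (dM U x X) + cscale c (Mpt U x)"
    by (rule exI[of _ 0]) (simp add: dM_K K_J0 cscale_mult cscale_0)
next
  fix Y assume "\<exists>c. dM U x Y = cscale \<i> (dM U x X) + cscale c (Mpt U x)"
  then obtain c where c: "dM U x Y = cscale \<i> (dM U x X) + cscale c (Mpt U x)" by blast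
  have "U ** K x Y = U ** (K x (J0 x X) + cscale c (Mfac x))"
    using c by (simp add: dM_K Mpt_eq K_J0 cscale_mult matrix_add_ldistrib)
  then have e: "K x Y = K x (J0 x X) + cscale c (Mfac x)"
    by (rule unitary_cancel[OF assms])
  obtain v w where Y: "Y = (v,w)" by (cases Y)
  obtain v' w' where J: "J0 x X = (v',w')" by (cases "J0 x X")
  show "Y = J0 x X" using K_inj[of x v w v' w' c] e Y J by simp
qed

lemma dH_eq:
  assumes "smooth_on {0<..} H" "x \<noteq> 0"
  shows "dH H x Y = deriv H (norm x) * (x \<bullet> fst Y) / norm x"
proof -
  obtain Df where D0: "Df 0 = H" and Dd: "\<forall>m. \<forall>t\<in>{0<..}. (Df m has_real_derivative Df (Suc m) t) (at t)"
    using assms(1) unfolding smooth_on_def by blast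
  have np: "norm x > 0" using assms(2) by simp
  have Hd: "(H has_real_derivative Df 1 (norm x)) (at (norm x))"
    using Dd np D0 by force
  have dv: "deriv H (norm x) = Df 1 (norm x)" using Hd by (rule DERIV_imp_deriv)
  have "((\<lambda>y. H (norm y)) has_derivative (\<lambda>h. Df 1 (norm x) * (h \<bullet> sgn x))) (at x)"
    using has_derivative_compose[OF has_derivative_norm[OF assms(2)] Hd[unfolded has_field_derivative_def]]
    by simp
  then have "frechet_derivative (\<lambda>y. H (norm y)) (at x) = (\<lambda>h. Df 1 (norm x) * (h \<bullet> sgn x))"
    by (rule frechet_derivative_at[symmetric])
  then show ?thesis unfolding dH_def dv
    by (simp add: sgn_div_norm inner_commute divide_inverse mult_ac)
qed

lemma Omega_eq: "unitary2 U \<Longrightarrow> Omega A U x Y Z = gamma A x (J0 x Y) Z"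
  by (simp add: Omega_def Jop_eq)

theorem proposition5p1:
  fixes A H :: "real \<Rightarrow> real" and U :: cmat and x :: "real^3"
  assumes "smooth_on {0<..} A" and "smooth_on {0<..} H"
    and "\<forall>y::real^3. y \<noteq> 0 \<longrightarrow> (\<forall>X. X \<noteq> 0 \<longrightarrow> gamma A y X X > 0)"
    and "unitary2 U" and "x \<noteq> 0"
  shows "HamVF A H U x =
           (0, (2 * sqrt (1 + (norm x)\<^sup>2) * deriv H (norm x)
                / ((1 + 2 * (norm x)\<^sup>2) * A (norm x) + (norm x + (norm x)^3) * deriv A (norm x)))
               *\<^sub>R ((1 / norm x) *\<^sub>R x))"
proof -
  define n where "n = norm x"
  define D where "D = (1 + 2 * n\<^sup>2) * A n + (n + n^3) * deriv A n"
  define k where "k = 2 * LL x * deriv H n / D"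
  have n0: "n \<noteq> 0" using assms(5) n_def by simp
  have L0: "LL x \<noteq> 0" using LL_pos[of x] by simp
  have pos: "\<And>W. W \<noteq> 0 \<Longrightarrow> gamma A x W W > 0" using assms(3) assms(5) by blast
  have "(0, x) \<noteq> (0::tvec)" using assms(5) by (simp add: zero_prod_def)
  then have "gamma A x (0,x) (0, 1 *\<^sub>R x) > 0" using pos by simp
  then have "(x \<bullet> x) / 4 * D > 0" unfolding G1[OF assms(5)] D_def n_def by simp
  then have D0: "D \<noteq> 0" by auto
  define Z0 :: tvec where "Z0 = (0, (k / n) *\<^sub>R x)"
  have Zsol: "Omega A U x Y Z0 = dH H x Y" for Y
  proof -
    obtain v w where Y: "Y = (v,w)" by (cases Y)
    have "Omega A U x Y Z0 = (k / n) * (2 * (x \<bullet> v) / LL x) / 4 * D"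
      unfolding Omega_eq[OF assms(4)] Z0_def Y G1[OF assms(5)] G2 D_def n_def by simp
    also have "\<dots> = deriv H n * (x \<bullet> v) / n"
      unfolding k_def using D0 L0 n0 by (simp add: field_simps)
    finally show ?thesis unfolding dH_eq[OF assms(2) assms(5)] Y n_def by simp
  qed
  have Zuniq: "Z = Z0" if hZ: "\<forall>Y. Omega A U x Y Z = dH H x Y" for Z
  proof (rule ccontr)
    assume ne: "Z \<noteq> Z0"
    define W where "W = Z - Z0"
    have W0: "W \<noteq> 0" using ne W_def by simp
    define Y where "Y = J0 x (- fst W, - snd W)"
    have JY: "J0 x Y = W" unfolding Y_def by (simp add: JJ)
    have "gamma A x W Z - gamma A x W Z0 = 0"
      using hZ[rule_format, of Y] Zsol[of Y] unfolding Omega_eq[OF assms(4)] JY by simp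
    then have "gamma A x W W = 0" unfolding gamma_diff W_def by simp
    with pos[OF W0] show False by simp
  qed
  have "HamVF A H U x = Z0"
    unfolding HamVF_def
    by (rule the_equality) (use Zsol Zuniq in auto)
  also have "Z0 = (0, (2 * sqrt (1 + (norm x)\<^sup>2) * deriv H (norm x)
                / ((1 + 2 * (norm x)\<^sup>2) * A (norm x) + (norm x + (norm x)^3) * deriv A (norm x)))
               *\<^sub>R ((1 / norm x) *\<^sub>R x))"
    unfolding Z0_def k_def D_def n_def LL_def by simp
  finally show ?thesis .
qed

end
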